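(* If $X$ is an uncountable, zero-dimensional, Borel subspace of a Polish space, then $\mathfrak{s}(X)=\mathfrak{s}(2^\omega)$.
   Context: For infinite sets $U, A$, say $U$ splits $A$ if both $A\cap U$ and $A\setminus U$ are infinite. For a topological space $X$, $\mathfrak{s}(X)$ is the smallest cardinality of a family $\mathcal{U}$ of open subsets of $X$ such that every infinite $A\subseteq X$ is split by some $U\in\mathcal{U}$. $2^\omega$ is the Cantor space. *)

theory Defs
  imports "HOL-Analysis.Analysis" "HOL-Library.Equipollence"
begin

definition splits :: "'a set \<Rightarrow> 'a set \<Rightarrow> bool" where
  "splits U A \<longleftrightarrow> infinite (A \<inter> U) \<and> infinite (A - U)"

definition splitting_family :: "'a topology \<Rightarrow> 'a set set \<Rightarrow> bool" where
  "splitting_family T \<U> \<longleftrightarrow>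
     (\<forall>U\<in>\<U>. openin T U) \<and>
     (\<forall>A. A \<subseteq> topspace T \<and> infinite A \<longrightarrow> (\<exists>U\<in>\<U>. splits U A))"

text \<open>s(T2) \<le> s(T1): every splitting family of T1 is at least as large as some
  splitting family of T2 (i.e. the minimal cardinality for T2 is at most that for T1).\<close>
definition split_num_le :: "'b topology \<Rightarrow> 'a topology \<Rightarrow> bool" where
  "split_num_le T2 T1 \<longleftrightarrow>
     (\<forall>\<U>. splitting_family T1 \<U> \<longrightarrow> (\<exists>\<V>. splitting_family T2 \<V> \<and> \<V> \<lesssim> \<U>))"

definition zero_dimensional :: "'a topology \<Rightarrow> bool" where
  "zero_dimensional T \<longleftrightarrow> neighbourhood_base_of (\<lambda>V. openin T V \<and> closedin T V) T"

definition cantor_space :: "(nat \<Rightarrow> bool) topology" where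
  "cantor_space = product_topology (\<lambda>_. discrete_topology UNIV) UNIV"

end

theory Submission
  imports Defs
begin

definition agree :: "nat \<Rightarrow> (nat \<Rightarrow> 'b) \<Rightarrow> (nat \<Rightarrow> 'b) \<Rightarrow> bool" where
  "agree n s t \<longleftrightarrow> (\<forall>i<n. s i = t i)"
definition closedB :: "(nat \<Rightarrow> nat) set \<Rightarrow> bool" where
  "closedB C \<longleftrightarrow> (\<forall>s. (\<forall>n. \<exists>t\<in>C. agree n s t) \<longrightarrow> s \<in> C)"
definition contB :: "(nat \<Rightarrow> nat) set \<Rightarrow> ((nat \<Rightarrow> nat) \<Rightarrow> 'a::metric_space) \<Rightarrow> bool" where
  "contB C g \<longleftrightarrow> (\<forall>s\<in>C. \<forall>e>0. \<exists>n. \<forall>t\<in>C. agree n s t \<longrightarrow> dist (g t) (g s) < e)"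
definition anal :: "'a::metric_space set \<Rightarrow> bool" where
  "anal S \<longleftrightarrow> (\<exists>C g. closedB C \<and> contB C g \<and> S = g ` C)"

lemma agree_mono: "agree n s t \<Longrightarrow> m \<le> n \<Longrightarrow> agree m s t"
  by (auto simp: agree_def)
lemma agree_sym: "agree n s t \<Longrightarrow> agree n t s"
  by (auto simp: agree_def)
lemma agree_trans: "agree n s t \<Longrightarrow> agree n t u \<Longrightarrow> agree n s u"
  by (auto simp: agree_def)

lemma closedB_preimage:
  fixes g :: "(nat \<Rightarrow> nat) \<Rightarrow> 'a::metric_space"
  assumes "closedB C" "contB C g" "closed F"
  shows "closedB {s\<in>C. g s \<in> F}"
  unfolding closedB_def
proof (intro allI impI)
  fix s assume H: "\<forall>n. \<exists>t\<in>{s \<in> C. g s \<in> F}. agree n s t"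
  then have sC: "s \<in> C" using assms(1) unfolding closedB_def by blast
  have "g s \<in> closure F"
    unfolding closure_approachable
  proof (intro allI impI)
    fix e :: real assume "e > 0"
    then obtain n where n: "\<forall>t\<in>C. agree n s t \<longrightarrow> dist (g t) (g s) < e"
      using assms(2) sC unfolding contB_def by blast
    from H obtain t where "t \<in> C" "g t \<in> F" "agree n s t" by blast
    then show "\<exists>y\<in>F. dist y (g s) < e" using n by blast
  qed
  then show "s \<in> {s \<in> C. g s \<in> F}" using sC assms(3) by (simp add: closure_closed)
qed

lemma dense_seq_exists:
  "\<exists>d::nat \<Rightarrow> 'a::polish_space. \<forall>x r. r > 0 \<longrightarrow> (\<exists>k. dist (d k) x < r)"
proof -
  obtain B :: "'a set set" where B: "countable B" "topological_basis B"
    using ex_countable_basis by blast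
  obtain D :: "'a set" where D: "countable D" "\<And>X. open X \<Longrightarrow> X \<noteq> {} \<Longrightarrow> \<exists>d\<in>D. d \<in> X"
    using countable_basis.countable_dense_setE[OF countable_basis_openI[OF B]] by blast
  have "D \<noteq> {}" using D(2)[of UNIV] by auto
  define d where "d = from_nat_into D"
  have rd: "range d = D" using D(1) \<open>D \<noteq> {}\<close> by (simp add: d_def)
  show ?thesis
  proof (intro exI[of _ d] allI impI)
    fix x :: 'a and r :: real assume "r > 0"
    then have "ball x r \<noteq> {}" by simp
    then obtain y where "y \<in> D" "y \<in> ball x r" using D(2)[OF open_ball] by blast
    then obtain k where "d k = y" using rd by blast
    then show "\<exists>k. dist (d k) x < r" using \<open>y \<in> ball x r\<close> by (intro exI[of _ k]) (simp add: dist_commute)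
  qed
qed

lemma C0_bound:
  fixes d :: "nat \<Rightarrow> 'a::metric_space"
  assumes C: "\<forall>n. dist (d (s n)) (d (s (Suc n))) < (1/2)^n"
  shows "n \<le> m \<Longrightarrow> dist (d (s n)) (d (s m)) \<le> 2*(1/2)^n - 2*(1/2::real)^m"
proof (induction m rule: dec_induct)
  case base then show ?case by simp
next
  case (step m)
  have "dist (d (s n)) (d (s (Suc m))) \<le> dist (d (s n)) (d (s m)) + dist (d (s m)) (d (s (Suc m)))"
    by (rule dist_triangle)
  also have "\<dots> \<le> 2*(1/2)^n - 2*(1/2::real)^m + (1/2)^m" using step.IH C[rule_format, of m] by linarith
  finally show ?case by (simp add: field_simps)
qed

lemma C0_lim:
  fixes d :: "nat \<Rightarrow> 'a::polish_space"
  assumes C: "\<forall>n. dist (d (s n)) (d (s (Suc n))) < (1/2)^n"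
  shows "convergent (\<lambda>n. d (s n))" "\<And>n. dist (d (s n)) (lim (\<lambda>n. d (s n))) \<le> 2*(1/2)^n"
proof -
  have "Cauchy (\<lambda>n. d (s n))"
    unfolding Cauchy_def
  proof (intro allI impI)
    fix e :: real assume "e > 0"
    then obtain M where M: "(1/2::real)^M < e/2" using real_arch_pow_inv[of "e/2" "1/2"] by auto
    have "dist (d (s m)) (d (s n)) < e" if "m \<ge> M" "n \<ge> M" for m n
    proof -
      have a: "(1/2::real)^m \<le> (1/2)^M" "(1/2::real)^n \<le> (1/2)^M"
        using that by (auto intro: power_decreasing)
      show ?thesis
      proof (cases "m \<le> n")
        case True
        then show ?thesis using C0_bound[of d s m n, OF C True] a M zero_le_power[of "1/2::real" n] zero_le_power[of "1/2::real" m] by linarith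
      next
        case False
        then show ?thesis using C0_bound[of d s n m, OF C] a M zero_le_power[of "1/2::real" n] zero_le_power[of "1/2::real" m] dist_commute[of "d (s m)" "d (s n)"] by linarith
      qed
    qed
    then show "\<exists>M. \<forall>m\<ge>M. \<forall>n\<ge>M. dist (d (s m)) (d (s n)) < e" by blast
  qed
  then show cv: "convergent (\<lambda>n. d (s n))" using Cauchy_convergent_iff by blast
  fix n
  have L: "(\<lambda>m. d (s m)) \<longlonglongrightarrow> lim (\<lambda>n. d (s n))" using cv convergent_LIMSEQ_iff by blast
  have "(\<lambda>m. dist (d (s n)) (d (s m))) \<longlonglongrightarrow> dist (d (s n)) (lim (\<lambda>n. d (s n)))"
    by (intro tendsto_intros L)
  moreover have "eventually (\<lambda>m. dist (d (s n)) (d (s m)) \<le> 2*(1/2)^n) sequentially"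
  proof (rule eventually_sequentiallyI[of n])
    fix m assume "n \<le> m"
    show "dist (d (s n)) (d (s m)) \<le> 2*(1/2)^n"
      using C0_bound[of d s n m, OF C \<open>n \<le> m\<close>] zero_le_power[of "1/2::real" m] by linarith
  qed
  ultimately show "dist (d (s n)) (lim (\<lambda>n. d (s n))) \<le> 2*(1/2)^n"
    by (rule tendsto_upperbound) simp
qed

lemma anal_UNIV_closed:
  fixes F :: "'a::polish_space set"
  assumes "closed F"
  shows "anal F"
proof -
  obtain d :: "nat \<Rightarrow> 'a" where d: "\<And>x r. r > 0 \<Longrightarrow> \<exists>k. dist (d k) x < r"
    using dense_seq_exists by blast
  define C0 where "C0 = {s. \<forall>n. dist (d (s n)) (d (s (Suc n))) < (1/2::real)^n}"
  define G where "G = (\<lambda>s. lim (\<lambda>n. d (s n)))"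
  have Gb: "dist (d (s n)) (G s) \<le> 2*(1/2)^n" if "s \<in> C0" for s n
    using C0_lim(2)[of d s n] that unfolding C0_def G_def by blast
  have cl: "closedB C0"
    unfolding closedB_def
  proof (intro allI impI)
    fix s assume H: "\<forall>n. \<exists>t\<in>C0. agree n s t"
    show "s \<in> C0" unfolding C0_def
    proof (intro CollectI allI)
      fix n
      obtain t where "t \<in> C0" "agree (Suc (Suc n)) s t" using H by blast
      then show "dist (d (s n)) (d (s (Suc n))) < (1/2)^n"
        unfolding C0_def agree_def by auto
    qed
  qed
  have ct: "contB C0 G"
    unfolding contB_def
  proof (intro ballI allI impI)
    fix s e assume "s \<in> C0" "(e::real) > 0"
    then obtain n where n: "(1/2::real)^n < e/4" using real_arch_pow_inv[of "e/4" "1/2"] by auto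
    show "\<exists>n. \<forall>t\<in>C0. agree n s t \<longrightarrow> dist (G t) (G s) < e"
    proof (intro exI[of _ "Suc n"] ballI impI)
      fix t assume "t \<in> C0" "agree (Suc n) s t"
      then have "t n = s n" by (auto simp: agree_def)
      have "dist (G t) (G s) \<le> dist (G t) (d (t n)) + dist (d (s n)) (G s)"
        using dist_triangle[of "G t" "G s" "d (t n)"] \<open>t n = s n\<close> by simp
      also have "\<dots> \<le> 4 * (1/2)^n" using Gb[OF \<open>t \<in> C0\<close>, of n] Gb[OF \<open>s \<in> C0\<close>, of n]
        dist_commute[of "G t" "d (t n)"] \<open>t n = s n\<close> by linarith
      finally show "dist (G t) (G s) < e" using n by simp
    qed
  qed
  have sur: "x \<in> G ` C0" for x
  proof -
    define s where "s = (\<lambda>n. SOME k. dist (d k) x < (1/2::real)^(n+2))"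
    have s: "dist (d (s n)) x < (1/2)^(n+2)" for n
      unfolding s_def by (rule someI_ex) (rule d, simp)
    have "s \<in> C0" unfolding C0_def
    proof (intro CollectI allI)
      fix n
      have "dist (d (s n)) (d (s (Suc n))) \<le> dist (d (s n)) x + dist (d (s (Suc n))) x"
        by (rule dist_triangle2)
      also have "\<dots> < (1/2)^(n+2) + (1/2)^(Suc n+2)" by (rule add_strict_mono[OF s s])
      also have "\<dots> \<le> (1/2)^n" by (simp add: power_add)
      finally show "dist (d (s n)) (d (s (Suc n))) < (1/2)^n" .
    qed
    have "(\<lambda>n. d (s n)) \<longlonglongrightarrow> x"
      unfolding lim_sequentially
    proof (intro allI impI)
      fix r :: real assume "r > 0"
      then obtain N where N: "(1/2::real)^N < r" using real_arch_pow_inv[of r "1/2"] by auto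
      have "dist (d (s n)) x < r" if "n \<ge> N" for n
      proof -
        have "(1/2::real)^(n+2) \<le> (1/2)^N" using that by (intro power_decreasing) auto
        then show ?thesis using s[of n] N by linarith
      qed
      then show "\<exists>N. \<forall>n\<ge>N. dist (d (s n)) x < r" by blast
    qed
    then have "G s = x" unfolding G_def by (rule limI)
    then show ?thesis using \<open>s \<in> C0\<close> by blast
  qed
  have "F = G ` {s\<in>C0. G s \<in> F}"
  proof
    show "F \<subseteq> G ` {s\<in>C0. G s \<in> F}"
    proof
      fix x assume "x \<in> F"
      obtain s where "s \<in> C0" "x = G s" using sur[of x] by blast
      then show "x \<in> G ` {s\<in>C0. G s \<in> F}" using \<open>x \<in> F\<close> by blast
    qed
  qed auto
  moreover have "closedB {s\<in>C0. G s \<in> F}" by (rule closedB_preimage[OF cl ct assms])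
  moreover have "contB {s\<in>C0. G s \<in> F} G" using ct unfolding contB_def by blast
  ultimately show ?thesis unfolding anal_def by metis
qed

lemma anal_UN:
  fixes S :: "nat \<Rightarrow> 'a::metric_space set"
  assumes "\<And>k. anal (S k)"
  shows "anal (\<Union>k. S k)"
proof -
  have "\<forall>k. \<exists>C g. closedB C \<and> contB C g \<and> S k = g ` C" using assms unfolding anal_def by blast
  then obtain C g where Cg: "\<And>k. closedB (C k)" "\<And>k. contB (C k) (g k)" "\<And>k. S k = g k ` C k"
    by metis
  define tl' :: "(nat \<Rightarrow> nat) \<Rightarrow> nat \<Rightarrow> nat" where "tl' s = (\<lambda>i. s (Suc i))" for s
  define C' where "C' = {s. tl' s \<in> C (s 0)}"
  define g' where "g' s = g (s 0) (tl' s)" for s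
  have ag: "agree (Suc n) s t \<Longrightarrow> t 0 = s 0 \<and> agree n (tl' s) (tl' t)" for n s t
    unfolding agree_def tl'_def by auto
  have "closedB C'"
    unfolding closedB_def
  proof (intro allI impI)
    fix s assume H: "\<forall>n. \<exists>t\<in>C'. agree n s t"
    have "\<forall>n. \<exists>t\<in>C (s 0). agree n (tl' s) t"
    proof
      fix n
      obtain t where "t \<in> C'" "agree (Suc n) s t" using H by blast
      then show "\<exists>t\<in>C (s 0). agree n (tl' s) t" using ag[of n s t] unfolding C'_def by auto
    qed
    then show "s \<in> C'" using Cg(1)[of "s 0"] unfolding closedB_def C'_def by blast
  qed
  moreover have "contB C' g'"
    unfolding contB_def
  proof (intro ballI allI impI)
    fix s e assume "s \<in> C'" "(e::real) > 0"
    then obtain n where n: "\<forall>t\<in>C (s 0). agree n (tl' s) t \<longrightarrow> dist (g (s 0) t) (g (s 0) (tl' s)) < e"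
      using Cg(2)[of "s 0"] unfolding contB_def C'_def by blast
    show "\<exists>n. \<forall>t\<in>C'. agree n s t \<longrightarrow> dist (g' t) (g' s) < e"
    proof (intro exI[of _ "Suc n"] ballI impI)
      fix t assume "t \<in> C'" "agree (Suc n) s t"
      then show "dist (g' t) (g' s) < e" using ag[of n s t] n unfolding C'_def g'_def by auto
    qed
  qed
  moreover have "(\<Union>k. S k) = g' ` C'"
  proof
    show "(\<Union>k. S k) \<subseteq> g' ` C'"
    proof
      fix y assume "y \<in> (\<Union>k. S k)"
      then obtain k x where "x \<in> C k" "y = g k x" using Cg(3) by blast
      moreover have "tl' (case_nat k x) = x" by (simp add: tl'_def)
      ultimately have "case_nat k x \<in> C'" "g' (case_nat k x) = y" unfolding C'_def g'_def by auto
      then show "y \<in> g' ` C'" by (metis image_eqI)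
    qed
    show "g' ` C' \<subseteq> (\<Union>k. S k)" unfolding C'_def g'_def using Cg(3) by blast
  qed
  ultimately show ?thesis unfolding anal_def by metis
qed

definition sp :: "(nat \<Rightarrow> nat) \<Rightarrow> nat \<Rightarrow> nat \<Rightarrow> nat" where
  "sp s k = (\<lambda>n. s (prod_encode (k, n)))"

definition spN :: "nat \<Rightarrow> nat \<Rightarrow> nat" where
  "spN m k = Suc (\<Sum>i<m. prod_encode (k, i))"

lemma agree_sp: "agree (spN m k) s t \<Longrightarrow> agree m (sp s k) (sp t k)"
  unfolding agree_def sp_def
proof (intro allI impI)
  fix i assume a: "\<forall>i<spN m k. s i = t i" and "i < m"
  then have "prod_encode (k, i) \<le> (\<Sum>i<m. prod_encode (k, i))"
    by (intro member_le_sum) auto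
  then show "s (prod_encode (k, i)) = t (prod_encode (k, i))" using a unfolding spN_def by auto
qed

lemma anal_INT:
  fixes S :: "nat \<Rightarrow> 'a::metric_space set"
  assumes "\<And>k. anal (S k)"
  shows "anal (\<Inter>k. S k)"
proof -
  have "\<forall>k. \<exists>C g. closedB C \<and> contB C g \<and> S k = g ` C" using assms unfolding anal_def by blast
  then obtain C g where Cg: "\<And>k. closedB (C k)" "\<And>k. contB (C k) (g k)" "\<And>k. S k = g k ` C k"
    by metis
  define NN where "NN = spN"
  have NN: "\<And>m k s t. agree (NN m k) s t \<Longrightarrow> agree m (sp s k) (sp t k)"
    unfolding NN_def by (rule agree_sp)
  define C' where "C' = {s. \<forall>k. sp s k \<in> C k \<and> g k (sp s k) = g 0 (sp s 0)}"
  define g' where "g' s = g 0 (sp s 0)" for s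
  have "closedB C'"
    unfolding closedB_def
  proof (intro allI impI)
    fix s assume H: "\<forall>n. \<exists>t\<in>C'. agree n s t"
    have inC: "sp s k \<in> C k" for k
    proof -
      have "\<forall>m. \<exists>t\<in>C k. agree m (sp s k) t"
      proof
        fix m
        obtain t where "t \<in> C'" "agree (NN m k) s t" using H by blast
        then have "sp t k \<in> C k" "agree m (sp s k) (sp t k)" unfolding C'_def by (blast, blast intro: NN)
        then show "\<exists>t\<in>C k. agree m (sp s k) t" by blast
      qed
      then show ?thesis using Cg(1)[of k] unfolding closedB_def by blast
    qed
    have eq: "g k (sp s k) = g 0 (sp s 0)" for k
    proof (rule ccontr)
      assume ne: "g k (sp s k) \<noteq> g 0 (sp s 0)"
      define e where "e = dist (g k (sp s k)) (g 0 (sp s 0)) / 2"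
      have "e > 0" using ne unfolding e_def by simp
      obtain m1 where m1: "\<forall>t\<in>C k. agree m1 (sp s k) t \<longrightarrow> dist (g k t) (g k (sp s k)) < e"
        using Cg(2)[of k] inC[of k] \<open>e > 0\<close> unfolding contB_def by blast
      obtain m0 where m0: "\<forall>t\<in>C 0. agree m0 (sp s 0) t \<longrightarrow> dist (g 0 t) (g 0 (sp s 0)) < e"
        using Cg(2)[of 0] inC[of 0] \<open>e > 0\<close> unfolding contB_def by blast
      obtain t where t: "t \<in> C'" "agree (max (NN m1 k) (NN m0 0)) s t" using H by blast
      have "agree m1 (sp s k) (sp t k)" by (rule NN, rule agree_mono[OF t(2)]) simp
      have "agree m0 (sp s 0) (sp t 0)" by (rule NN, rule agree_mono[OF t(2)]) simp
      have d1: "dist (g k (sp t k)) (g k (sp s k)) < e"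
        using m1 t(1) \<open>agree m1 (sp s k) (sp t k)\<close> unfolding C'_def by blast
      have d0: "dist (g 0 (sp t 0)) (g 0 (sp s 0)) < e"
        using m0 t(1) \<open>agree m0 (sp s 0) (sp t 0)\<close> unfolding C'_def by blast
      have eqt: "g k (sp t k) = g 0 (sp t 0)" using t(1) unfolding C'_def by auto
      have "dist (g k (sp s k)) (g 0 (sp s 0)) < 2 * e"
        using dist_triangle[of "g k (sp s k)" "g 0 (sp s 0)" "g k (sp t k)"] d1 d0[folded eqt]
          dist_commute[of "g k (sp s k)" "g k (sp t k)"] by linarith
      then show False unfolding e_def by simp
    qed
    show "s \<in> C'" unfolding C'_def using inC eq by blast
  qed
  moreover have "contB C' g'"
    unfolding contB_def
  proof (intro ballI allI impI)
    fix s e assume "s \<in> C'" "(e::real) > 0"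
    then obtain m where m: "\<forall>t\<in>C 0. agree m (sp s 0) t \<longrightarrow> dist (g 0 t) (g 0 (sp s 0)) < e"
      using Cg(2)[of 0] unfolding contB_def C'_def by blast
    show "\<exists>n. \<forall>t\<in>C'. agree n s t \<longrightarrow> dist (g' t) (g' s) < e"
    proof (intro exI[of _ "NN m 0"] ballI impI)
      fix t assume "t \<in> C'" "agree (NN m 0) s t"
      then have "agree m (sp s 0) (sp t 0)" "sp t 0 \<in> C 0" unfolding C'_def by (blast intro: NN, blast)
      then show "dist (g' t) (g' s) < e" using m unfolding g'_def by blast
    qed
  qed
  moreover have "(\<Inter>k. S k) = g' ` C'"
  proof
    show "(\<Inter>k. S k) \<subseteq> g' ` C'"
    proof
      fix y assume "y \<in> (\<Inter>k. S k)"
      then have "y \<in> g k ` C k" for k using Cg(3)[of k] by blast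
      then have "\<exists>x. x \<in> C k \<and> y = g k x" for k by blast
      then obtain \<tau> where tau: "\<And>k. \<tau> k \<in> C k" "\<And>k. y = g k (\<tau> k)" by metis
      define s where "s j = \<tau> (fst (prod_decode j)) (snd (prod_decode j))" for j
      have sps: "sp s k = \<tau> k" for k by (rule ext) (simp add: sp_def s_def)
      have geq: "g k (\<tau> k) = g 0 (\<tau> 0)" for k using tau(2)[of k] tau(2)[of 0] by simp
      have "s \<in> C'" unfolding C'_def mem_Collect_eq sps using tau(1) geq by blast
      moreover have "g' s = y" unfolding g'_def by (simp add: sps tau(2)[of 0])
      ultimately show "y \<in> g' ` C'" by (metis image_eqI)
    qed
    show "g' ` C' \<subseteq> (\<Inter>k. S k)"
    proof
      fix y assume "y \<in> g' ` C'"
      then obtain s where "s \<in> C'" "y = g' s" by blast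
      then have "sp s k \<in> C k" "g k (sp s k) = g 0 (sp s 0)" for k unfolding C'_def by auto
      then have "y = g k (sp s k) \<and> sp s k \<in> C k" for k using \<open>y = g' s\<close> unfolding g'_def by metis
      then have "y \<in> S k" for k unfolding Cg(3)[of k] by blast
      then show "y \<in> (\<Inter>k. S k)" by blast
    qed
  qed
  ultimately show ?thesis unfolding anal_def by metis
qed

lemma anal_empty: "anal ({} :: 'a::metric_space set)"
  unfolding anal_def closedB_def contB_def by auto

lemma anal_open:
  fixes A :: "'a::polish_space set"
  assumes "open A"
  shows "anal A"
proof (cases "A = UNIV")
  case True then show ?thesis using anal_UNIV_closed[of UNIV] by simp
next
  case False
  define F where "F n = {x. 1 / real (Suc n) \<le> infdist x (-A)}" for n
  have "closed (F n)" for n unfolding F_def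
    by (intro closed_Collect_le continuous_intros)
  then have "anal (F n)" for n by (rule anal_UNIV_closed)
  then have "anal (\<Union>n. F n)" by (rule anal_UN)
  moreover have "(\<Union>n. F n) = A"
  proof
    show "(\<Union>n. F n) \<subseteq> A"
    proof
      fix x assume "x \<in> (\<Union>n. F n)"
      then obtain n where "1 / real (Suc n) \<le> infdist x (-A)" unfolding F_def by auto
      moreover have "0 < 1 / real (Suc n)" by simp
      ultimately have "infdist x (-A) \<noteq> 0" by linarith
      then show "x \<in> A" by (metis ComplI infdist_zero)
    qed
    show "A \<subseteq> (\<Union>n. F n)"
    proof
      fix x assume "x \<in> A"
      have "infdist x (-A) > 0"
        using infdist_pos_not_in_closed[of "-A" x] assms False \<open>x \<in> A\<close> by auto
      then obtain n where "inverse (real (Suc n)) < infdist x (-A)" using reals_Archimedean by blast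
      then have "1 / real (Suc n) \<le> infdist x (-A)" by (simp add: inverse_eq_divide)
      then show "x \<in> (\<Union>n. F n)" unfolding F_def by blast
    qed
  qed
  ultimately show ?thesis by simp
qed

lemma borel_anal:
  fixes A :: "'a::polish_space set"
  assumes "A \<in> sets borel"
  shows "anal A"
proof -
  have "A \<in> sigma_sets UNIV {S. open S}" using assms sets_borel by blast
  then have "anal A \<and> anal (-A)"
  proof (induction rule: sigma_sets.induct)
    case (Basic a)
    then show ?case using anal_open anal_UNIV_closed[of "-a"] by auto
  next
    case Empty
    then show ?case using anal_empty anal_UNIV_closed[of UNIV] by auto
  next
    case (Compl a)
    then show ?case by (simp add: Compl_eq_Diff_UNIV[symmetric])
  next
    case (Union a)
    have "anal (\<Union>i. a i)" using Union.IH by (intro anal_UN) auto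
    moreover have "anal (\<Inter>i. - a i)" using Union.IH by (intro anal_INT) auto
    ultimately show ?case by simp
  qed
  then show ?thesis by simp
qed

definition cylL :: "nat list \<Rightarrow> (nat \<Rightarrow> nat) set" where
  "cylL p = {s. \<forall>i<length p. s i = p ! i}"
definition pre :: "(nat \<Rightarrow> nat) \<Rightarrow> nat \<Rightarrow> nat list" where
  "pre s n = map s [0..<n]"
definition lext :: "nat list \<Rightarrow> nat list \<Rightarrow> bool" where
  "lext p q \<longleftrightarrow> length p \<le> length q \<and> (\<forall>i<length p. p ! i = q ! i)"

lemma cylL_pre: "t \<in> cylL (pre s n) \<longleftrightarrow> agree n s t"
  unfolding cylL_def pre_def agree_def by auto

lemma self_cylL_pre: "s \<in> cylL (pre s n)"
  unfolding cylL_def pre_def by auto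

lemma length_pre[simp]: "length (pre s n) = n"
  unfolding pre_def by simp

lemma lext_cyl: "lext p q \<Longrightarrow> cylL q \<subseteq> cylL p"
  unfolding lext_def cylL_def by auto

lemma lext_trans: "lext p q \<Longrightarrow> lext q r \<Longrightarrow> lext p r"
  unfolding lext_def by auto

lemma lext_refl: "lext p p"
  unfolding lext_def by auto

lemma cyl_agree: "s \<in> cylL p \<Longrightarrow> t \<in> cylL p \<Longrightarrow> m \<le> length p \<Longrightarrow> agree m s t"
  unfolding cylL_def agree_def by auto

primrec Tr :: "(nat list \<Rightarrow> nat list \<times> nat list) \<Rightarrow> (nat \<Rightarrow> bool) \<Rightarrow> nat \<Rightarrow> nat list" where
  "Tr pk x 0 = []"
| "Tr pk x (Suc n) = (if x n then snd else fst) (pk (Tr pk x n))"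

lemma Tr_agree: "agree n x y \<Longrightarrow> Tr pk x n = Tr pk y n"
proof (induction n)
  case 0 then show ?case by simp
next
  case (Suc n)
  then have "agree n x y" "x n = y n" by (auto simp: agree_def)
  then show ?case using Suc.IH by simp
qed

lemma uncountable_two:
  assumes "uncountable A"
  obtains a b where "a \<in> A" "b \<in> A" "a \<noteq> b"
proof -
  have "\<not> A \<subseteq> {a}" for a using assms countable_subset by blast
  moreover have "A \<noteq> {}" using assms by auto
  ultimately show ?thesis using that by blast
qed

lemma unc_aux: "X \<subseteq> Y \<union> Z \<Longrightarrow> countable Z \<Longrightarrow> uncountable X \<Longrightarrow> uncountable Y"
  by (meson countable_Un countable_subset)

lemma anal_perfect:
  fixes S :: "'a::metric_space set"
  assumes "anal S" "uncountable S"
  shows "\<exists>h::(nat \<Rightarrow> bool) \<Rightarrow> 'a. inj h \<and> range h \<subseteq> S \<and>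
           (\<forall>x. \<forall>e>0. \<exists>m. \<forall>y. agree m x y \<longrightarrow> dist (h y) (h x) < e)"
proof -
  obtain C g where C: "closedB C" and g: "contB C g" and S: "S = g ` C"
    using assms(1) unfolding anal_def by blast
  define B where "B = {s\<in>C. \<exists>n. countable (g ` (C \<inter> cylL (pre s n)))}"
  have "g ` B \<subseteq> (\<Union>p\<in>{p. countable (g ` (C \<inter> cylL p))}. g ` (C \<inter> cylL p))"
  proof
    fix y assume "y \<in> g ` B"
    then obtain s n where "s \<in> C" "y = g s" "countable (g ` (C \<inter> cylL (pre s n)))"
      unfolding B_def by blast
    then show "y \<in> (\<Union>p\<in>{p. countable (g ` (C \<inter> cylL p))}. g ` (C \<inter> cylL p))"
      using self_cylL_pre[of s n] by blast
  qed
  moreover have "countable (\<Union>p\<in>{p. countable (g ` (C \<inter> cylL p))}. g ` (C \<inter> cylL p))"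
    by (rule countable_UN) auto
  ultimately have cB: "countable (g ` B)" by (rule countable_subset)
  define C' where "C' = C - B"
  define good where "good p \<longleftrightarrow> uncountable (g ` (C' \<inter> cylL p))" for p
  have sub: "g ` (C \<inter> P) \<subseteq> g ` (C' \<inter> P) \<union> g ` B" for P unfolding C'_def by blast
  have good_nil: "good []"
  proof -
    have "cylL [] = UNIV" unfolding cylL_def by simp
    then have "g ` C \<subseteq> g ` (C' \<inter> cylL []) \<union> g ` B" using sub[of UNIV] by simp
    moreover have "uncountable (g ` C)" using assms(2) S by simp
    ultimately show ?thesis unfolding good_def using unc_aux cB by blast
  qed
  have good_pre: "good (pre s n)" if "s \<in> C'" for s n
  proof -
    have "s \<in> C" "s \<notin> B" using that unfolding C'_def by auto
    then have "uncountable (g ` (C \<inter> cylL (pre s n)))" unfolding B_def by simp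
    then show ?thesis unfolding good_def using unc_aux[OF sub[of "cylL (pre s n)"] cB] by blast
  qed
  define P where "P p q0 q1 \<longleftrightarrow> lext p q0 \<and> lext p q1 \<and> length p < length q0 \<and> length p < length q1
     \<and> good q0 \<and> good q1 \<and> g ` (C \<inter> cylL q0) \<inter> g ` (C \<inter> cylL q1) = {}" for p q0 q1
  have split: "\<exists>q0 q1. P p q0 q1" if "good p" for p
  proof -
    obtain y0 y1 where "y0 \<in> g ` (C' \<inter> cylL p)" "y1 \<in> g ` (C' \<inter> cylL p)" "y0 \<noteq> y1"
      using uncountable_two[of "g ` (C' \<inter> cylL p)"] \<open>good p\<close> unfolding good_def by metis
    then obtain s0 s1 where s: "s0 \<in> C'" "s0 \<in> cylL p" "s1 \<in> C'" "s1 \<in> cylL p" "g s0 \<noteq> g s1"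
      by blast
    define r where "r = dist (g s0) (g s1) / 2"
    have "r > 0" using s(5) unfolding r_def by simp
    have "s0 \<in> C" "s1 \<in> C" using s unfolding C'_def by auto
    obtain n0 where n0: "\<forall>t\<in>C. agree n0 s0 t \<longrightarrow> dist (g t) (g s0) < r"
      using g \<open>s0 \<in> C\<close> \<open>r > 0\<close> unfolding contB_def by blast
    obtain n1 where n1: "\<forall>t\<in>C. agree n1 s1 t \<longrightarrow> dist (g t) (g s1) < r"
      using g \<open>s1 \<in> C\<close> \<open>r > 0\<close> unfolding contB_def by blast
    define q0 where "q0 = pre s0 (max n0 (Suc (length p)))"
    define q1 where "q1 = pre s1 (max n1 (Suc (length p)))"
    have b0: "dist (g t) (g s0) < r" if "t \<in> C \<inter> cylL q0" for t
    proof -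
      from that have "t \<in> C" "t \<in> cylL q0" by auto
      then have "agree n0 s0 t" unfolding q0_def cylL_pre using agree_mono max.cobounded1 by blast
      then show ?thesis using n0 \<open>t \<in> C\<close> by blast
    qed
    have b1: "dist (g t) (g s1) < r" if "t \<in> C \<inter> cylL q1" for t
    proof -
      from that have "t \<in> C" "t \<in> cylL q1" by auto
      then have "agree n1 s1 t" unfolding q1_def cylL_pre using agree_mono max.cobounded1 by blast
      then show ?thesis using n1 \<open>t \<in> C\<close> by blast
    qed
    have disj: "g ` (C \<inter> cylL q0) \<inter> g ` (C \<inter> cylL q1) = {}"
    proof (rule ccontr)
      assume "g ` (C \<inter> cylL q0) \<inter> g ` (C \<inter> cylL q1) \<noteq> {}"
      then obtain t0 t1 where "t0 \<in> C \<inter> cylL q0" "t1 \<in> C \<inter> cylL q1" "g t0 = g t1" by blast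
      then have "dist (g t0) (g s0) < r" "dist (g t1) (g s1) < r" using b0 b1 by blast+
      then have "dist (g t0) (g s0) < r" "dist (g t0) (g s1) < r" using \<open>g t0 = g t1\<close> by simp_all
      then have "dist (g s0) (g s1) < 2 * r"
        using dist_triangle[of "g s0" "g s1" "g t0"] dist_commute[of "g s0" "g t0"] by linarith
      then show False unfolding r_def by simp
    qed
    have l0: "lext p q0" using s(2) unfolding lext_def q0_def pre_def cylL_def by auto
    have l1: "lext p q1" using s(4) unfolding lext_def q1_def pre_def cylL_def by auto
    show ?thesis unfolding P_def
      apply (rule exI[of _ q0], rule exI[of _ q1])
      using l0 l1 disj good_pre[OF s(1)] good_pre[OF s(3)] unfolding q0_def q1_def by auto
  qed
  define pk where "pk p = (SOME qq. P p (fst qq) (snd qq))" for p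
  have pk: "P p (fst (pk p)) (snd (pk p))" if "good p" for p
    using someI_ex[of "\<lambda>qq. P p (fst qq) (snd qq)"] split[OF that] unfolding pk_def by simp
  have Tgood: "good (Tr pk x n)" for x n
  proof (induction n)
    case 0 then show ?case using good_nil by simp
  next
    case (Suc n) then show ?case using pk[OF Suc.IH] unfolding P_def by simp
  qed
  have Tstep: "lext (Tr pk x n) (Tr pk x (Suc n)) \<and> length (Tr pk x n) < length (Tr pk x (Suc n))" for x n
    using pk[OF Tgood[of x n]] unfolding P_def by simp
  have Tlen: "n \<le> length (Tr pk x n)" for x n
  proof (induction n)
    case 0 then show ?case by simp
  next
    case (Suc n) then show ?case using Tstep[of x n] by simp
  qed
  have Tmono: "m \<le> n \<Longrightarrow> lext (Tr pk x m) (Tr pk x n)" for x m n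
  proof (induction n rule: dec_induct)
    case base then show ?case by (rule lext_refl)
  next
    case (step n) then show ?case using Tstep[of x n] lext_trans by blast
  qed
  define \<sigma> where "\<sigma> x = (\<lambda>i. Tr pk x (Suc i) ! i)" for x
  have sig_cyl: "\<sigma> x \<in> cylL (Tr pk x n)" for x n
    unfolding cylL_def
  proof (intro CollectI allI impI)
    fix i assume i: "i < length (Tr pk x n)"
    have li: "i < length (Tr pk x (Suc i))" using Tlen[of "Suc i" x] by simp
    show "\<sigma> x i = Tr pk x n ! i"
    proof (cases "Suc i \<le> n")
      case True
      then show ?thesis using Tmono[OF True, of x] li unfolding \<sigma>_def lext_def by simp
    next
      case False
      then have "n \<le> Suc i" by simp
      then show ?thesis using Tmono[of n "Suc i" x] i unfolding \<sigma>_def lext_def by simp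
    qed
  qed
  have sig_C: "\<sigma> x \<in> C" for x
  proof -
    have "\<exists>t\<in>C. agree m (\<sigma> x) t" for m
    proof -
      have "g ` (C' \<inter> cylL (Tr pk x m)) \<noteq> {}" using Tgood[of x m] unfolding good_def by auto
      then obtain t where "t \<in> C'" "t \<in> cylL (Tr pk x m)" by blast
      then have "t \<in> C" "agree m (\<sigma> x) t"
        using cyl_agree[OF sig_cyl[of x m], of t m] Tlen[of m x] unfolding C'_def by auto
      then show ?thesis by blast
    qed
    then show ?thesis using C unfolding closedB_def by blast
  qed
  define h where "h x = g (\<sigma> x)" for x
  have "inj h"
  proof (rule injI)
    fix x y assume hxy: "h x = h y"
    show "x = y"
    proof (rule ccontr)
      assume "x \<noteq> y"
      then have "\<exists>n. x n \<noteq> y n" by auto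
      define n where "n = (LEAST n. x n \<noteq> y n)"
      have xn: "x n \<noteq> y n" unfolding n_def using \<open>\<exists>n. x n \<noteq> y n\<close> by (rule LeastI_ex)
      have "agree n x y" unfolding agree_def
      proof (intro allI impI)
        fix i assume "i < n"
        then show "x i = y i" using not_less_Least[of i "\<lambda>n. x n \<noteq> y n"] unfolding n_def by blast
      qed
      then have eqT: "Tr pk x n = Tr pk y n" by (rule Tr_agree)
      have Pn: "P (Tr pk x n) (fst (pk (Tr pk x n))) (snd (pk (Tr pk x n)))" by (rule pk[OF Tgood[of x n]])
      have "\<sigma> x \<in> C \<inter> cylL (Tr pk x (Suc n))" using sig_C[of x] sig_cyl[of x] by blast
      then have hx: "h x \<in> g ` (C \<inter> cylL (Tr pk x (Suc n)))" unfolding h_def by (rule imageI)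
      have "\<sigma> y \<in> C \<inter> cylL (Tr pk y (Suc n))" using sig_C[of y] sig_cyl[of y] by blast
      then have hy: "h y \<in> g ` (C \<inter> cylL (Tr pk y (Suc n)))" unfolding h_def by (rule imageI)
      have "g ` (C \<inter> cylL (Tr pk x (Suc n))) \<inter> g ` (C \<inter> cylL (Tr pk y (Suc n))) = {}"
      proof (cases "x n")
        case True
        then have "\<not> y n" using xn by simp
        then show ?thesis using Pn True eqT unfolding P_def by (simp add: Int_commute)
      next
        case False
        then have "y n" using xn by simp
        then show ?thesis using Pn False eqT unfolding P_def by simp
      qed
      then show False using hx hy hxy by auto
    qed
  qed
  moreover have "range h \<subseteq> S" unfolding h_def S using sig_C by auto
  moreover have "\<forall>x. \<forall>e>0. \<exists>m. \<forall>y. agree m x y \<longrightarrow> dist (h y) (h x) < e"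
  proof (intro allI impI)
    fix x and e :: real assume "e > 0"
    then obtain m where m: "\<forall>t\<in>C. agree m (\<sigma> x) t \<longrightarrow> dist (g t) (g (\<sigma> x)) < e"
      using g sig_C unfolding contB_def by blast
    show "\<exists>m. \<forall>y. agree m x y \<longrightarrow> dist (h y) (h x) < e"
    proof (intro exI[of _ m] allI impI)
      fix y assume "agree m x y"
      then have "Tr pk y m = Tr pk x m" using Tr_agree[of m x y pk] by simp
      then have "\<sigma> y \<in> cylL (Tr pk x m)" using sig_cyl[of y m] by simp
      then have "agree m (\<sigma> x) (\<sigma> y)" using cyl_agree[OF sig_cyl[of x m]] Tlen[of m x] by blast
      then show "dist (h y) (h x) < e" using m sig_C unfolding h_def by blast
    qed
  qed
  ultimately show ?thesis by (intro exI[of _ h] conjI)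
qed

lemma topspace_cantor[simp]: "topspace cantor_space = UNIV"
  unfolding cantor_space_def by (simp add: topspace_product_topology)

lemma cantor_coord_open: "openin cantor_space {y. y i = b}"
proof -
  have "continuous_map cantor_space (discrete_topology UNIV) (\<lambda>x. x i)"
    unfolding cantor_space_def by (rule continuous_map_product_projection) simp
  then have "openin cantor_space {x \<in> topspace cantor_space. x i \<in> {b}}"
    by (rule openin_continuous_map_preimage) simp
  then show ?thesis by simp
qed

lemma cantor_cyl_open: "openin cantor_space {y. agree m x y}"
proof (induction m)
  case 0
  then show ?case using openin_topspace[of cantor_space] by (simp add: agree_def)
next
  case (Suc m)
  have "{y. agree (Suc m) x y} = {y. agree m x y} \<inter> {y. y m = x m}"
    unfolding agree_def by (auto simp: less_Suc_eq)
  then show ?case using Suc.IH cantor_coord_open by (simp add: openin_Int)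
qed

lemma transfer_from_cantor:
  fixes X :: "'a::metric_space set" and h :: "(nat \<Rightarrow> bool) \<Rightarrow> 'a"
  assumes "inj h" "range h \<subseteq> X"
    and ct: "\<forall>x. \<forall>e>0. \<exists>m. \<forall>y. agree m x y \<longrightarrow> dist (h y) (h x) < e"
  shows "split_num_le cantor_space (top_of_set X)"
  unfolding split_num_le_def
proof (intro allI impI)
  fix \<U> assume U: "splitting_family (top_of_set X) \<U>"
  define \<V> where "\<V> = (\<lambda>U. h -` U) ` \<U>"
  have "\<V> \<lesssim> \<U>" unfolding \<V>_def by (rule image_lepoll)
  moreover have "splitting_family cantor_space \<V>"
    unfolding splitting_family_def
  proof (intro conjI ballI allI impI)
    fix V assume "V \<in> \<V>"
    then obtain U where "U \<in> \<U>" "V = h -` U" unfolding \<V>_def by blast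
    then have "openin (top_of_set X) U" using U unfolding splitting_family_def by blast
    then obtain Ob where O: "open Ob" "U = X \<inter> Ob" unfolding openin_open by blast
    have V: "V = h -` Ob" using \<open>V = h -` U\<close> O(2) assms(2) by auto
    show "openin cantor_space V"
      unfolding openin_subopen[of cantor_space V]
    proof
      fix x assume "x \<in> V"
      then have "h x \<in> Ob" using V by simp
      then obtain e where "e > 0" "ball (h x) e \<subseteq> Ob" using O(1) open_contains_ball by blast
      then obtain m where m: "\<forall>y. agree m x y \<longrightarrow> dist (h y) (h x) < e" using ct by blast
      have "{y. agree m x y} \<subseteq> V"
      proof
        fix y assume "y \<in> {y. agree m x y}"
        then have "h y \<in> ball (h x) e" using m dist_commute[of "h x" "h y"] by simp
        then show "y \<in> V" using V \<open>ball (h x) e \<subseteq> Ob\<close> by auto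
      qed
      moreover have "x \<in> {y. agree m x y}" by (simp add: agree_def)
      ultimately show "\<exists>T. openin cantor_space T \<and> x \<in> T \<and> T \<subseteq> V"
        using cantor_cyl_open by blast
    qed
  next
    fix A :: "(nat \<Rightarrow> bool) set" assume A: "A \<subseteq> topspace cantor_space \<and> infinite A"
    have "infinite (h ` A)" using A assms(1) finite_imageD inj_on_subset by (metis subset_UNIV)
    moreover have "h ` A \<subseteq> topspace (top_of_set X)" using assms(2) by auto
    ultimately obtain U where "U \<in> \<U>" "splits U (h ` A)" using U unfolding splitting_family_def by blast
    then have i1: "infinite (h ` A \<inter> U)" and i2: "infinite (h ` A - U)" unfolding splits_def by auto
    have "h ` (A \<inter> h -` U) = h ` A \<inter> U" by auto
    then have "infinite (A \<inter> h -` U)" using i1 by (metis finite_imageI)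
    moreover have "h ` (A - h -` U) = h ` A - U" by auto
    then have "infinite (A - h -` U)" using i2 by (metis finite_imageI)
    ultimately have "splits (h -` U) A" unfolding splits_def by blast
    then show "\<exists>V\<in>\<V>. splits V A" using \<open>U \<in> \<U>\<close> unfolding \<V>_def by blast
  qed
  ultimately show "\<exists>\<V>. splitting_family cantor_space \<V> \<and> \<V> \<lesssim> \<U>" by blast
qed

lemma transfer_to_cantor:
  fixes X :: "'a::topological_space set"
  assumes "continuous_map (top_of_set X) cantor_space e" "inj_on e X"
  shows "split_num_le (top_of_set X) cantor_space"
  unfolding split_num_le_def
proof (intro allI impI)
  fix \<W> assume W: "splitting_family cantor_space \<W>"
  define \<V> where "\<V> = (\<lambda>W. X \<inter> e -` W) ` \<W>"
  have "\<V> \<lesssim> \<W>" unfolding \<V>_def by (rule image_lepoll)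
  moreover have "splitting_family (top_of_set X) \<V>"
    unfolding splitting_family_def
  proof (intro conjI ballI allI impI)
    fix V assume "V \<in> \<V>"
    then obtain W' where "W' \<in> \<W>" "V = X \<inter> e -` W'" unfolding \<V>_def by blast
    then have "openin cantor_space W'" using W unfolding splitting_family_def by blast
    then have "openin (top_of_set X) {x \<in> topspace (top_of_set X). e x \<in> W'}"
      by (rule openin_continuous_map_preimage[OF assms(1)])
    moreover have "{x \<in> topspace (top_of_set X). e x \<in> W'} = V" using \<open>V = X \<inter> e -` W'\<close> by auto
    ultimately show "openin (top_of_set X) V" by simp
  next
    fix A assume A: "A \<subseteq> topspace (top_of_set X) \<and> infinite A"
    then have AX: "A \<subseteq> X" by simp
    have "infinite (e ` A)" using A AX assms(2) finite_imageD inj_on_subset by metis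
    then obtain W' where "W' \<in> \<W>" "splits W' (e ` A)" using W unfolding splitting_family_def by auto
    then have i1: "infinite (e ` A \<inter> W')" and i2: "infinite (e ` A - W')" unfolding splits_def by auto
    have "e ` (A \<inter> (X \<inter> e -` W')) = e ` A \<inter> W'" using AX by auto
    then have "infinite (A \<inter> (X \<inter> e -` W'))" using i1 by (metis finite_imageI)
    moreover have "e ` (A - (X \<inter> e -` W')) = e ` A - W'" using AX by auto
    then have "infinite (A - (X \<inter> e -` W'))" using i2 by (metis finite_imageI)
    ultimately have "splits (X \<inter> e -` W') A" unfolding splits_def by blast
    then show "\<exists>V\<in>\<V>. splits V A" using \<open>W' \<in> \<W>\<close> unfolding \<V>_def by blast
  qed
  ultimately show "\<exists>\<V>. splitting_family (top_of_set X) \<V> \<and> \<V> \<lesssim> \<W>" by blast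
qed

lemma bool_valued_cont:
  assumes "openin (top_of_set X) D" "closedin (top_of_set X) D"
  shows "continuous_map (top_of_set X) (discrete_topology UNIV) (\<lambda>x. x \<in> D)"
  unfolding continuous_map_def
proof (intro conjI allI impI ballI)
  fix U :: "bool set" assume "openin (discrete_topology UNIV) U"
  have DX: "D \<subseteq> X" using openin_subset[OF assms(1)] by simp
  have o2: "openin (top_of_set X) (X - D)" using assms(2) unfolding closedin_def by simp
  have e1: "{x \<in> topspace (top_of_set X). (x \<in> D) \<in> U} =
        (if True \<in> U then D else {}) \<union> (if False \<in> U then X - D else {})"
  proof -
    have key: "((x \<in> D) \<in> U) = ((x \<in> D \<and> True \<in> U) \<or> (x \<notin> D \<and> False \<in> U))" for x
      by (cases "x \<in> D") auto
    show ?thesis using DX by (auto simp: key)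
  qed
  have "openin (top_of_set X) ((if True \<in> U then D else {}) \<union> (if False \<in> U then X - D else {}))"
    by (intro openin_Un) (simp_all add: assms(1) o2)
  then show "openin (top_of_set X) {x \<in> topspace (top_of_set X). (x \<in> D) \<in> U}"
    using e1 by simp
qed simp

lemma zero_dim_embed:
  fixes X :: "'a::polish_space set"
  assumes "zero_dimensional (top_of_set X)"
  shows "\<exists>e. continuous_map (top_of_set X) cantor_space e \<and> inj_on e X"
proof -
  define clop where "clop V \<longleftrightarrow> openin (top_of_set X) V \<and> closedin (top_of_set X) V" for V
  have nb: "\<And>W x. openin (top_of_set X) W \<Longrightarrow> x \<in> W \<Longrightarrow>
      \<exists>U V. openin (top_of_set X) U \<and> clop V \<and> x \<in> U \<and> U \<subseteq> V \<and> V \<subseteq> W"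
    using assms unfolding zero_dimensional_def neighbourhood_base_of clop_def by simp
  obtain Bs :: "'a set set" where Bs: "countable Bs" "topological_basis Bs"
    using ex_countable_basis by blast
  define ok where "ok b' b \<longleftrightarrow> (\<exists>V. clop V \<and> X \<inter> b' \<subseteq> V \<and> V \<subseteq> b)" for b' b
  define cl where "cl b' b = (SOME V. clop V \<and> X \<inter> b' \<subseteq> V \<and> V \<subseteq> b)" for b' b
  have cl: "clop (cl b' b) \<and> X \<inter> b' \<subseteq> cl b' b \<and> cl b' b \<subseteq> b" if "ok b' b" for b' b
    using that unfolding ok_def cl_def by (rule someI_ex)
  define Fam where "Fam = (\<lambda>(b', b). cl b' b) ` {(b', b). b' \<in> Bs \<and> b \<in> Bs \<and> ok b' b} \<union> {{}}"
  have "{(b', b). b' \<in> Bs \<and> b \<in> Bs \<and> ok b' b} \<subseteq> Bs \<times> Bs" by auto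
  then have "countable {(b', b). b' \<in> Bs \<and> b \<in> Bs \<and> ok b' b}"
    by (rule countable_subset) (simp add: Bs(1))
  then have "countable Fam" unfolding Fam_def by (intro countable_Un countable_image) simp_all
  moreover have "Fam \<noteq> {}" unfolding Fam_def by blast
  define D where "D = from_nat_into Fam"
  have D: "range D = Fam" unfolding D_def using \<open>countable Fam\<close> \<open>Fam \<noteq> {}\<close> by simp
  have Dclop: "clop (D n)" for n
  proof -
    have "D n \<in> Fam" using D by blast
    then consider "D n = {}" | b' b where "ok b' b" "D n = cl b' b" unfolding Fam_def by auto
    then show ?thesis
    proof cases
      case 1 then show ?thesis by (simp add: clop_def)
    next
      case 2 then show ?thesis using cl[of b' b] by simp
    qed
  qed
  define e where "e x = (\<lambda>n. x \<in> D n)" for x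
  have "continuous_map (top_of_set X) cantor_space e"
    unfolding cantor_space_def continuous_map_componentwise_UNIV e_def
  proof
    fix k
    show "continuous_map (top_of_set X) (discrete_topology UNIV) (\<lambda>x. x \<in> D k)"
      using Dclop[of k] unfolding clop_def by (intro bool_valued_cont) auto
  qed
  moreover have "inj_on e X"
  proof (rule inj_onI)
    fix x y assume "x \<in> X" "y \<in> X" "e x = e y"
    show "x = y"
    proof (rule ccontr)
      assume "x \<noteq> y"
      have "open (- {y})" by (intro open_Compl closed_singleton)
      moreover have "x \<in> - {y}" using \<open>x \<noteq> y\<close> by simp
      ultimately obtain b where b: "b \<in> Bs" "x \<in> b" "b \<subseteq> - {y}"
        by (rule topological_basisE[OF Bs(2)])
      have "open b" using topological_basis_open[OF Bs(2) b(1)] .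
      then have "openin (top_of_set X) (X \<inter> b)"
        unfolding openin_open by (intro exI[of _ b] conjI) simp_all
      moreover have "x \<in> X \<inter> b" using \<open>x \<in> X\<close> b(2) by simp
      ultimately have "\<exists>U V. openin (top_of_set X) U \<and> clop V \<and> x \<in> U \<and> U \<subseteq> V \<and> V \<subseteq> X \<inter> b"
        by (rule nb)
      then obtain U V where UV: "openin (top_of_set X) U" "clop V" "x \<in> U" "U \<subseteq> V" "V \<subseteq> X \<inter> b"
        by blast
      obtain Ob where Ob: "open Ob" "U = X \<inter> Ob" using UV(1) unfolding openin_open by blast
      then have "x \<in> Ob" using UV(3) by blast
      then obtain b' where b': "b' \<in> Bs" "x \<in> b'" "b' \<subseteq> Ob"
        by (rule topological_basisE[OF Bs(2) Ob(1)])
      have "X \<inter> b' \<subseteq> V" using UV(4) Ob(2) b'(3) by blast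
      moreover have "V \<subseteq> b" using UV(5) by blast
      ultimately have "ok b' b" unfolding ok_def using UV(2) by blast
      then have c: "clop (cl b' b)" "X \<inter> b' \<subseteq> cl b' b" "cl b' b \<subseteq> b" using cl by blast+
      have "cl b' b \<in> Fam" unfolding Fam_def using \<open>ok b' b\<close> b(1) b'(1) by blast
      then have "cl b' b \<in> range D" using D by simp
      then obtain n where "D n = cl b' b" by (metis rangeE)
      moreover have "x \<in> cl b' b" using c(2) \<open>x \<in> X\<close> b'(2) by blast
      moreover have "y \<notin> cl b' b" using c(3) b(3) by blast
      ultimately have "e x n \<noteq> e y n" unfolding e_def by simp
      then show False using \<open>e x = e y\<close> by simp
    qed
  qed
  ultimately show ?thesis by blast
qed

theorem lemma2p3:
  fixes X :: "'a::polish_space set"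
  assumes "uncountable X"
    and "zero_dimensional (top_of_set X)"
    and "X \<in> sets borel"
  shows "split_num_le cantor_space (top_of_set X) \<and> split_num_le (top_of_set X) cantor_space"
proof
  have "anal X" using assms(3) by (rule borel_anal)
  then have "\<exists>h::(nat \<Rightarrow> bool) \<Rightarrow> 'a. inj h \<and> range h \<subseteq> X \<and>
           (\<forall>x. \<forall>e>0. \<exists>m. \<forall>y. agree m x y \<longrightarrow> dist (h y) (h x) < e)"
    by (rule anal_perfect[OF _ assms(1)])
  then obtain h :: "(nat \<Rightarrow> bool) \<Rightarrow> 'a" where "inj h" "range h \<subseteq> X"
    "\<forall>x. \<forall>e>0. \<exists>m. \<forall>y. agree m x y \<longrightarrow> dist (h y) (h x) < e"
    by blast
  then show "split_num_le cantor_space (top_of_set X)" by (rule transfer_from_cantor)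
next
  obtain e where "continuous_map (top_of_set X) cantor_space e" "inj_on e X"
    using zero_dim_embed[OF assms(2)] by blast
  then show "split_num_le (top_of_set X) cantor_space" by (rule transfer_to_cantor)
qed

end
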